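(* Let $1\le k\le n$ and let $a_{i,j}\in\mathbb C$ for $0\le i<j\le k$. If $$\sum_{0\le i<j\le k}a_{i,j}\,\mathrm{Tr}_{\{k+1,\dots,n\}}\big(|D_n^i\rangle\langle D_n^j|\big)=0,$$ then $a_{i,j}=0$ for all $0\le i<j\le k$.
   Context: Dicke states: $|D_n^i\rangle=\binom{n}{i}^{-1/2}\sum_{s\in\{0,1\}^n,\ \sum_js_j=i}|s_1\rangle\otimes\cdots\otimes|s_n\rangle$ in $(\mathbb C^2)^{\otimes n}$; $\mathrm{Tr}_{\{k+1,\dots,n\}}$ is the partial trace over qubits $k+1,\dots,n$ (for $k=n$ it is the identity map). *)

theory Defs
  imports Complex_Main
begin

text \<open>Computational basis states of m qubits are bit strings, represented as
  bool lists of length m (True = |1>). A vector in (C^2)^{\<otimes> m} is a function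
  on such strings, an operator is a kernel on pairs of strings (its matrix
  entries), both extended by 0 outside strings of length m.\<close>

definition bitstrings :: "nat \<Rightarrow> bool list set" where
  "bitstrings m = {s. length s = m}"

definition weight :: "bool list \<Rightarrow> nat" where
  "weight s = length (filter id s)"

definition dicke :: "nat \<Rightarrow> nat \<Rightarrow> bool list \<Rightarrow> complex" where
  "dicke n i s = (if length s = n \<and> weight s = i
                  then complex_of_real (1 / sqrt (real (n choose i))) else 0)"

definition outer :: "(bool list \<Rightarrow> complex) \<Rightarrow> (bool list \<Rightarrow> complex) \<Rightarrow> bool list \<Rightarrow> bool list \<Rightarrow> complex" where
  "outer u v = (\<lambda>s t. u s * cnj (v t))"

definition ptrace :: "nat \<Rightarrow> nat \<Rightarrow> (bool list \<Rightarrow> bool list \<Rightarrow> complex) \<Rightarrow> bool list \<Rightarrow> bool list \<Rightarrow> complex" where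
  "ptrace n k M = (\<lambda>s t. if length s = k \<and> length t = k
      then (\<Sum>u\<in>bitstrings (n - k). M (s @ u) (t @ u)) else 0)"

end

theory Submission
  imports Defs
begin

lemma fin_bs: "finite (bitstrings m)"
proof -
  have "finite {xs. set xs \<subseteq> (UNIV::bool set) \<and> length xs = m}"
    by (rule finite_lists_length_eq) simp
  thus ?thesis unfolding bitstrings_def by simp
qed

lemma weight_append: "weight (s @ u) = weight s + weight u"
  unfolding weight_def by simp

lemma entryA:
  assumes "k \<le> n" "length s = k" "length t = k"
    and "ptrace n k (outer (dicke n i) (dicke n j)) s t \<noteq> 0"
  shows "\<exists>u. weight s + weight u = i \<and> weight t + weight u = j"
proof (rule ccontr)
  assume H: "\<not> ?thesis"
  have "ptrace n k (outer (dicke n i) (dicke n j)) s t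
        = (\<Sum>u\<in>bitstrings (n - k). dicke n i (s @ u) * cnj (dicke n j (t @ u)))"
    using assms by (simp add: ptrace_def outer_def)
  also have "\<dots> = 0"
    by (rule sum.neutral) (use H in \<open>auto simp: dicke_def weight_append\<close>)
  finally show False using assms by simp
qed

lemma weight0: "weight u = 0 \<longleftrightarrow> u = replicate (length u) False"
  unfolding weight_def
  by (induction u) auto

lemma entryB:
  assumes "k \<le> n" "length s = k" "length t = k" "weight s = i" "weight t = j"
  shows "ptrace n k (outer (dicke n i) (dicke n j)) s t
     = complex_of_real (1 / sqrt (real (n choose i))) * complex_of_real (1 / sqrt (real (n choose j)))"
proof -
  let ?z = "replicate (n - k) False"
  have z: "?z \<in> bitstrings (n - k)" by (simp add: bitstrings_def)
  have "ptrace n k (outer (dicke n i) (dicke n j)) s t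
        = (\<Sum>u\<in>bitstrings (n - k). dicke n i (s @ u) * cnj (dicke n j (t @ u)))"
    using assms by (simp add: ptrace_def outer_def)
  also have "\<dots> = dicke n i (s @ ?z) * cnj (dicke n j (t @ ?z))
       + (\<Sum>u\<in>bitstrings (n - k) - {?z}. dicke n i (s @ u) * cnj (dicke n j (t @ u)))"
    by (rule sum.remove[OF fin_bs z])
  also have "(\<Sum>u\<in>bitstrings (n - k) - {?z}. dicke n i (s @ u) * cnj (dicke n j (t @ u))) = 0"
  proof (rule sum.neutral, intro ballI)
    fix u assume u: "u \<in> bitstrings (n - k) - {?z}"
    hence "weight u \<noteq> 0" using weight0[of u] by (auto simp: bitstrings_def)
    thus "dicke n i (s @ u) * cnj (dicke n j (t @ u)) = 0"
      using assms by (auto simp: dicke_def weight_append)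
  qed
  also have "weight ?z = 0" using weight0 by simp
  hence "dicke n i (s @ ?z) * cnj (dicke n j (t @ ?z)) =
     complex_of_real (1 / sqrt (real (n choose i))) * complex_of_real (1 / sqrt (real (n choose j)))"
    using assms by (simp add: dicke_def weight_append)
  finally show ?thesis by simp
qed

lemma exists_ws:
  assumes "i \<le> k" shows "\<exists>s. length s = k \<and> weight s = i"
  by (rule exI[of _ "replicate i True @ replicate (k - i) False"])
     (use assms in \<open>simp add: weight_def\<close>)

theorem mainTheorem17:
  fixes n k :: nat and a :: "nat \<Rightarrow> nat \<Rightarrow> complex"
  assumes "1 \<le> k" and "k \<le> n"
    and "(\<lambda>s t. \<Sum>(i, j)\<in>{(i, j). i < j \<and> j \<le> k}.
            a i j * ptrace n k (outer (dicke n i) (dicke n j)) s t) = (\<lambda>s t. 0)"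
  shows "\<forall>i j. i < j \<and> j \<le> k \<longrightarrow> a i j = 0"
proof -
  let ?P = "{(i, j). i < j \<and> j \<le> k}"
  let ?E = "\<lambda>i j s t. ptrace n k (outer (dicke n i) (dicke n j)) s t"
  have finP: "finite ?P"
    by (rule finite_subset[of _ "{..k} \<times> {..k}"]) auto
  have S0: "\<And>s t. (\<Sum>(i, j)\<in>?P. a i j * ?E i j s t) = 0"
    using assms(3) by (metis (no_types, lifting))
  have main: "\<And>m i j. k - j = m \<Longrightarrow> i < j \<Longrightarrow> j \<le> k \<Longrightarrow> a i j = 0"
  proof -
    fix m
    show "\<And>i j. k - j = m \<Longrightarrow> i < j \<Longrightarrow> j \<le> k \<Longrightarrow> a i j = 0"
    proof (induction m rule: less_induct)
      case (less m i j)
      obtain s where s: "length s = k" "weight s = i" using exists_ws[of i k] less by auto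
      obtain t where t: "length t = k" "weight t = j" using exists_ws[of j k] less by auto
      have ij: "(i, j) \<in> ?P" using less by auto
      have "0 = (\<Sum>(i', j')\<in>?P. a i' j' * ?E i' j' s t)" using S0 by simp
      also have "\<dots> = (\<lambda>(i', j'). a i' j' * ?E i' j' s t) (i, j)
          + (\<Sum>(i', j')\<in>?P - {(i, j)}. a i' j' * ?E i' j' s t)"
        by (rule sum.remove[OF finP ij])
      also have "(\<Sum>(i', j')\<in>?P - {(i, j)}. a i' j' * ?E i' j' s t) = 0"
      proof (rule sum.neutral, intro ballI)
        fix x assume x: "x \<in> ?P - {(i, j)}"
        obtain i' j' where xe: "x = (i', j')" by (cases x)
        have "a i' j' * ?E i' j' s t = 0"
        proof (cases "?E i' j' s t = 0")
          case False
          then obtain u where u: "i + weight u = i'" "j + weight u = j'"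
            using entryA[OF assms(2) s(1) t(1)] s t by blast
          have "weight u \<noteq> 0" using u x xe by auto
          hence "k - j' < m" using u x xe less by auto
          hence "a i' j' = 0" using less.IH x xe by auto
          thus ?thesis by simp
        qed simp
        thus "(\<lambda>(i', j'). a i' j' * ?E i' j' s t) x = 0" using xe by simp
      qed
      finally have "a i j * ?E i j s t = 0" by simp
      moreover have "?E i j s t \<noteq> 0"
      proof -
        have "n choose i > 0" "n choose j > 0" using less assms by auto
        thus ?thesis using entryB[OF assms(2) s(1) t(1) s(2) t(2)] by simp
      qed
      ultimately show ?case by simp
    qed
  qed
  show ?thesis using main by blast
qed

end
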